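(* The semigroup $S=sgp^+\langle a,b\mid aba=ba\rangle$ is not automatic.
   Context: $sgp^+\langle A\mid R\rangle$ is the free semigroup $A^+$ of nonempty words modulo the congruence generated by $R$. Automaticity: regular = accepted by a finite automaton. With $\$\notin A$, $A(2,\$)=(A\cup\{\$\})^2\setminus\{(\$,\$)\}$; $(\alpha,\beta)\delta_A^R$ is the word over $A(2,\$)$ obtained by padding the shorter word on the right with $\$$'s and reading letter pairs. A semigroup $S$ is automatic if there are a finite generating set $A$ (with canonical epimorphism $\phi:A^+\to S$) and a regular $L\subseteq A^+$ with $\phi(L)=S$ such that for every $a\in A\cup\{\varepsilon\}$ the language $\{(\alpha,\beta)\delta^R_A:\alpha,\beta\in L,\ \phi(\alpha a)=\phi(\beta)\}$ is regular. *)

theory Defs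
  imports Main
begin

text \<open>For languages contained in the words over a finite alphabet this is
exactly the usual notion.\<close>

definition regular :: "'x list set \<Rightarrow> bool" where
  "regular L \<longleftrightarrow> (\<exists>(Q :: nat set) q0 (\<delta> :: nat \<Rightarrow> 'x \<Rightarrow> nat) F.
      finite Q \<and> q0 \<in> Q \<and> (\<forall>q\<in>Q. \<forall>x. \<delta> q x \<in> Q) \<and> F \<subseteq> Q \<and>
      L = {w. foldl \<delta> q0 w \<in> F})"

section \<open>Padded pair words (padding symbol \$ rendered as None)\<close>

definition padR :: "'a list \<Rightarrow> 'a list \<Rightarrow> ('a option \<times> 'a option) list" where
  "padR \<alpha> \<beta> = zip (map Some \<alpha> @ replicate (length \<beta> - length \<alpha>) None)
                   (map Some \<beta> @ replicate (length \<alpha> - length \<beta>) None)"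

fun evalw :: "('s \<Rightarrow> 's \<Rightarrow> 's) \<Rightarrow> 's list \<Rightarrow> 's" where
  "evalw mult [] = undefined"
| "evalw mult (x # xs) = foldl mult x xs"

text \<open>Here the letter
a is encoded as Some a and \<epsilon> as None.\<close>
definition automatic :: "'s set \<Rightarrow> ('s \<Rightarrow> 's \<Rightarrow> 's) \<Rightarrow> bool" where
  "automatic S mult \<longleftrightarrow> (\<exists>A L.
      A \<subseteq> S \<and> finite A \<and>
      L \<subseteq> lists A - {[]} \<and> regular L \<and> evalw mult ` L = S \<and>
      (\<forall>a \<in> Some ` A \<union> {None}.
         regular {padR \<alpha> \<beta> | \<alpha> \<beta>. \<alpha> \<in> L \<and> \<beta> \<in> L \<and>
            evalw mult (\<alpha> @ (case a of None \<Rightarrow> [] | Some x \<Rightarrow> [x])) = evalw mult \<beta>}))"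

definition elem_step :: "('g list \<times> 'g list) set \<Rightarrow> ('g list \<times> 'g list) set" where
  "elem_step R = {(x @ l @ y, x @ r @ y) | x y l r. (l, r) \<in> R}"

definition pcong :: "('g list \<times> 'g list) set \<Rightarrow> ('g list \<times> 'g list) set" where
  "pcong R = (elem_step R \<union> (elem_step R)\<inverse>)\<^sup>*"

definition pclass :: "('g list \<times> 'g list) set \<Rightarrow> 'g list \<Rightarrow> 'g list set" where
  "pclass R w = pcong R `` {w}"

definition pcarrier :: "('g list \<times> 'g list) set \<Rightarrow> 'g list set set" where
  "pcarrier R = pclass R ` {w. w \<noteq> []}"

definition pmult :: "('g list \<times> 'g list) set \<Rightarrow> 'g list set \<Rightarrow> 'g list set \<Rightarrow> 'g list set" where
  "pmult R X Y = pclass R ((SOME u. u \<in> X) @ (SOME v. v \<in> Y))"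

datatype gen_ab = ga | gb

definition R_aba :: "(gen_ab list \<times> gen_ab list) set" where
  "R_aba = {([ga, gb, ga], [gb, ga])}"

end

theory Submission
  imports Defs
begin

definition rep :: "gen_ab list set \<Rightarrow> gen_ab list" where
  "rep X = (SOME u. u \<in> X)"

definition flat :: "gen_ab list set list \<Rightarrow> gen_ab list" where
  "flat xs = concat (map rep xs)"

definition bc :: "gen_ab list \<Rightarrow> nat" where
  "bc w = length (filter (\<lambda>c. c = gb) w)"

lemma bc_append[simp]: "bc (u @ v) = bc u + bc v"
  by (simp add: bc_def)

lemma flat_append[simp]: "flat (u @ v) = flat u @ flat v"
  by (simp add: flat_def)

lemma flat_Cons[simp]: "flat (x # v) = rep x @ flat v"
  by (simp add: flat_def)

lemma flat_Nil[simp]: "flat [] = []"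
  by (simp add: flat_def)

lemma elem_step_ctx:
  assumes "(u,v) \<in> elem_step R" shows "(x@u@y, x@v@y) \<in> elem_step R"
proof -
  from assms obtain x' y' l r where "u = x'@l@y'" "v = x'@r@y'" "(l,r) \<in> R"
    unfolding elem_step_def by blast
  then have "x@u@y = (x@x')@l@(y'@y)" "x@v@y = (x@x')@r@(y'@y)" by auto
  then show ?thesis unfolding elem_step_def using \<open>(l,r) \<in> R\<close> by blast
qed

lemma pcong_ctx:
  assumes "(u,v) \<in> pcong R" shows "(x@u@y, x@v@y) \<in> pcong R"
  using assms unfolding pcong_def
proof (induction rule: rtrancl_induct)
  case base
  then show ?case by simp
next
  case (step v w)
  then have "(x@v@y, x@w@y) \<in> elem_step R \<union> (elem_step R)\<inverse>"
    using elem_step_ctx by blast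
  with step show ?case by (meson rtrancl.rtrancl_into_rtrancl)
qed

lemma pcong_sym: "(u,v) \<in> pcong R \<Longrightarrow> (v,u) \<in> pcong R"
  unfolding pcong_def
  by (metis converse_Un converse_converse rtrancl_converseI sup_commute)

lemma pcong_trans: "(u,v) \<in> pcong R \<Longrightarrow> (v,w) \<in> pcong R \<Longrightarrow> (u,w) \<in> pcong R"
  unfolding pcong_def by (rule rtrancl_trans)

lemma pcong_refl: "(u,u) \<in> pcong R"
  unfolding pcong_def by simp

lemma pclass_eq: "(u,v) \<in> pcong R \<Longrightarrow> pclass R u = pclass R v"
  unfolding pclass_def using pcong_sym pcong_trans by blast

lemma pclass_eqD: "pclass R u = pclass R v \<Longrightarrow> (u,v) \<in> pcong R"
  unfolding pclass_def using pcong_refl by blast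

lemma rep_pclass: "(w, rep (pclass R w)) \<in> pcong R"
proof -
  have "w \<in> pclass R w" unfolding pclass_def using pcong_refl by blast
  then have "rep (pclass R w) \<in> pclass R w" unfolding rep_def by (rule someI)
  then show ?thesis unfolding pclass_def by blast
qed

lemma rep_in: "X \<in> pcarrier R \<Longrightarrow> X = pclass R (rep X)"
  unfolding pcarrier_def using rep_pclass pclass_eq by blast

lemma foldl_pmult:
  "set xs \<subseteq> pcarrier R \<Longrightarrow> foldl (pmult R) (pclass R w) xs = pclass R (w @ flat xs)"
proof (induction xs arbitrary: w)
  case Nil
  then show ?case by simp
next
  case (Cons y ys)
  have "(rep (pclass R w) @ rep y, w @ rep y) \<in> pcong R"
    using pcong_ctx[OF pcong_sym[OF rep_pclass[of w R]], of "[]" "rep y"] by simp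
  then have "pmult R (pclass R w) y = pclass R (w @ rep y)"
    unfolding pmult_def rep_def[symmetric] by (rule pclass_eq)
  then show ?case using Cons by simp
qed

lemma evalw_flat:
  assumes "xs \<noteq> []" "set xs \<subseteq> pcarrier R"
  shows "evalw (pmult R) xs = pclass R (flat xs)"
proof (cases xs)
  case Nil then show ?thesis using assms by simp
next
  case (Cons y ys)
  then have "y = pclass R (rep y)" using assms rep_in by auto
  then have "evalw (pmult R) xs = foldl (pmult R) (pclass R (rep y)) ys" using Cons by simp
  also have "\<dots> = pclass R (flat xs)" using foldl_pmult[of ys R "rep y"] assms Cons by simp
  finally show ?thesis .
qed

lemma bc_step: "(u,v) \<in> elem_step R_aba \<Longrightarrow> bc u = bc v"
  unfolding elem_step_def R_aba_def by (auto simp: bc_def)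

lemma bc_pcong: "(u,v) \<in> pcong R_aba \<Longrightarrow> bc u = bc v"
  unfolding pcong_def
proof (induction rule: rtrancl_induct)
  case base then show ?case by simp
next
  case (step v w) then show ?case using bc_step by auto
qed

lemma no_ba: "replicate k ga @ replicate n gb \<noteq> x @ [gb, ga] @ y"
proof (induction x arbitrary: k)
  case Nil
  show ?case
  proof
    assume h: "replicate k ga @ replicate n gb = [] @ [gb, ga] @ y"
    show False
    proof (cases k)
      case 0
      then have "ga \<in> set (replicate n gb)" using h by (metis append.left_neutral append_Cons list.set_intros(1) list.set_intros(2) replicate_0)
      then show False by simp
    next
      case (Suc m) then show False using h by simp
    qed
  qed
next
  case (Cons c x)
  show ?case
  proof
    assume h: "replicate k ga @ replicate n gb = (c # x) @ [gb, ga] @ y"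
    show False
    proof (cases k)
      case 0
      then have "ga \<in> set (replicate n gb)" using h by simp
      then show False by simp
    next
      case (Suc m) then show False using h Cons.IH[of m] by simp
    qed
  qed
qed

lemma singleton_class:
  "pclass R_aba (replicate k ga @ replicate n gb) = {replicate k ga @ replicate n gb}"
proof -
  let ?w = "replicate k ga @ replicate n gb"
  have nostep: "(?w, v) \<notin> elem_step R_aba \<union> (elem_step R_aba)\<inverse>" for v
  proof
    assume "(?w, v) \<in> elem_step R_aba \<union> (elem_step R_aba)\<inverse>"
    then obtain x y where "?w = x @ [ga,gb,ga] @ y \<or> ?w = x @ [gb,ga] @ y"
      unfolding elem_step_def R_aba_def by blast
    then show False using no_ba[of k n "x@[ga]" y] no_ba[of k n x y] by auto
  qed
  have "v = ?w" if "(?w, v) \<in> pcong R_aba" for v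
    using that unfolding pcong_def
    by (rule converse_rtranclE) (use nostep in auto)
  then show ?thesis unfolding pclass_def using pcong_refl by blast
qed

lemma a_bn_a: "(ga # replicate (Suc m) gb @ [ga], replicate (Suc m) gb @ [ga]) \<in> pcong R_aba"
proof (induction m)
  case 0
  have "([] @ [ga,gb,ga] @ [], [] @ [gb,ga] @ []) \<in> elem_step R_aba"
    unfolding elem_step_def R_aba_def by blast
  then show ?case unfolding pcong_def by auto
next
  case (Suc m)
  let ?B = "replicate (Suc m) gb"
  have e1: "((ga # ?B) @ [ga,gb,ga] @ [], (ga # ?B) @ [gb,ga] @ []) \<in> elem_step R_aba"
    unfolding elem_step_def R_aba_def by blast
  have e2: "(?B @ [ga,gb,ga] @ [], ?B @ [gb,ga] @ []) \<in> elem_step R_aba"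
    unfolding elem_step_def R_aba_def by blast
  have s1: "((ga # ?B) @ [gb,ga], (ga # ?B) @ [ga,gb,ga]) \<in> pcong R_aba"
    using e1 unfolding pcong_def by auto
  have s2: "((ga # ?B) @ [ga,gb,ga], (?B @ [ga]) @ [gb,ga]) \<in> pcong R_aba"
    using pcong_ctx[OF Suc, of "[]" "[gb,ga]"] by simp
  have s3: "((?B @ [ga]) @ [gb,ga], ?B @ [gb,ga]) \<in> pcong R_aba"
    using e2 unfolding pcong_def by auto
  have eq1: "replicate (Suc (Suc m)) gb @ [ga] = ?B @ [gb,ga]"
    by (metis append.assoc append_Cons append_Nil replicate_Suc replicate_append_same)
  have "((ga # ?B) @ [gb,ga], ?B @ [gb,ga]) \<in> pcong R_aba"
    using pcong_trans[OF pcong_trans[OF s1 s2] s3] .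
  then show ?case unfolding eq1 by simp
qed

lemma ak_bn_a: "(replicate k ga @ replicate (Suc m) gb @ [ga], replicate (Suc m) gb @ [ga]) \<in> pcong R_aba"
proof (induction k)
  case 0 then show ?case using pcong_refl by simp
next
  case (Suc k)
  have "([ga] @ (replicate k ga @ replicate (Suc m) gb @ [ga]) @ [], [ga] @ (replicate (Suc m) gb @ [ga]) @ []) \<in> pcong R_aba"
    by (rule pcong_ctx[OF Suc])
  then show ?case using a_bn_a[of m] pcong_trans by fastforce
qed

lemma foldl_in: "\<forall>q\<in>Q. \<forall>x. \<delta> q x \<in> Q \<Longrightarrow> q \<in> Q \<Longrightarrow> foldl \<delta> q w \<in> Q"
  by (induction w arbitrary: q) auto

lemma padR_fst: "map fst (padR a b) = map Some a @ replicate (length b - length a) None"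
  unfolding padR_def by simp

lemma padR_snd: "map snd (padR a b) = map Some b @ replicate (length a - length b) None"
  unfolding padR_def by simp

lemma unpad: "map the (filter (\<lambda>z. z \<noteq> None) (map Some a @ replicate k None)) = a"
  by (induction a) (auto simp: filter_replicate)

lemma padR_inj: "padR a b = padR a' b' \<Longrightarrow> a = a' \<and> b = b'"
  using padR_fst[of a b] padR_fst[of a' b'] padR_snd[of a b] padR_snd[of a' b'] unpad
  by metis

lemma padR_split:
  assumes "length g \<le> length a"
  shows "padR a g = zip (map Some (take (length g) a)) (map Some g) @ map (\<lambda>c. (Some c, None)) (drop (length g) a)"
proof -
  have "map Some a = map Some (take (length g) a) @ map Some (drop (length g) a)"
    by (metis append_take_drop_id map_append)
  then have "padR a g = zip (map Some (take (length g) a) @ map Some (drop (length g) a)) (map Some g @ replicate (length a - length g) None)"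
    unfolding padR_def using assms by simp
  also have "\<dots> = zip (map Some (take (length g) a)) (map Some g) @ zip (map Some (drop (length g) a)) (replicate (length a - length g) None)"
    using assms by (simp add: zip_append)
  also have "zip (map Some (drop (length g) a)) (replicate (length a - length g) None) = map (\<lambda>c. (Some c, None)) (drop (length g) a)"
    by (simp add: zip_replicate2 zip_map1 map_zip_map)
  finally show ?thesis .
qed

lemma concat_single: "concat xs = [c] \<Longrightarrow> [c] \<in> set xs"
  by (induction xs) (auto simp: append_eq_Cons_conv)

lemma bc_rep0: "bc (replicate l ga) = 0"
  by (induction l) (auto simp: bc_def)

theorem lemma3p2p4:
  shows "\<not> automatic (pcarrier R_aba) (pmult R_aba)"
proof
  assume "automatic (pcarrier R_aba) (pmult R_aba)"
  then obtain A L where A: "A \<subseteq> pcarrier R_aba" "finite A"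
    and L: "L \<subseteq> lists A - {[]}" "regular L" "evalw (pmult R_aba) ` L = pcarrier R_aba"
    and LX: "\<forall>a \<in> Some ` A \<union> {None}.
         regular {padR \<alpha> \<beta> | \<alpha> \<beta>. \<alpha> \<in> L \<and> \<beta> \<in> L \<and>
            evalw (pmult R_aba) (\<alpha> @ (case a of None \<Rightarrow> [] | Some x \<Rightarrow> [x])) = evalw (pmult R_aba) \<beta>}"
    unfolding automatic_def by (elim exE conjE) (rule that)
  let ?ev = "evalw (pmult R_aba)"
  have evL: "?ev xs = pclass R_aba (flat xs)" if "xs \<in> L" for xs
    using that L(1) A(1) evalw_flat[of xs R_aba] by (auto simp: in_lists_conv_set)
  have evLx: "?ev (xs @ [y]) = pclass R_aba (flat xs @ rep y)" if "xs \<in> L" "y \<in> A" for xs y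
    using that L(1) A(1) evalw_flat[of "xs @ [y]" R_aba] by (auto simp: in_lists_conv_set)
  have surj: "\<exists>xs\<in>L. ?ev xs = pclass R_aba w" if "w \<noteq> []" for w
  proof -
    have "pclass R_aba w \<in> pcarrier R_aba" unfolding pcarrier_def using that by blast
    then show ?thesis using L(3) by (metis imageE)
  qed
  define x where "x = pclass R_aba [ga]"
  have x_single: "x = {[ga]}" unfolding x_def using singleton_class[of 1 0] by simp
  then have repx: "rep x = [ga]" unfolding rep_def by simp
  have xA: "x \<in> A"
  proof -
    obtain \<omega> where om: "\<omega> \<in> L" "?ev \<omega> = x" using surj[of "[ga]"] x_def by auto
    then have "pclass R_aba (flat \<omega>) = x" using evL by simp
    then have "flat \<omega> \<in> x" using pcong_refl unfolding pclass_def by blast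
    then have "flat \<omega> = [ga]" using x_single by simp
    then have "[ga] \<in> set (map rep \<omega>)" unfolding flat_def by (rule concat_single)
    then obtain g where g: "g \<in> set \<omega>" "rep g = [ga]" by auto
    have gA: "g \<in> A" using g om L(1) by auto
    then have "g = pclass R_aba (rep g)" using A(1) rep_in by blast
    then show ?thesis using g gA x_def by simp
  qed
  define LA where "LA = {padR \<alpha> \<beta> | \<alpha> \<beta>. \<alpha> \<in> L \<and> \<beta> \<in> L \<and> ?ev (\<alpha> @ [x]) = ?ev \<beta>}"
  have "regular LA" using LX xA unfolding LA_def by force
  then obtain Q q0 \<delta> Fs where Q: "finite (Q :: nat set)" "q0 \<in> Q" "\<forall>q\<in>Q. \<forall>c. \<delta> q c \<in> Q" "Fs \<subseteq> Q"
    and LAe: "LA = {w. foldl \<delta> q0 w \<in> Fs}"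
    unfolding regular_def apply (elim exE conjE) apply (rule that) apply assumption+ done
  obtain M where M: "\<forall>g\<in>A. length (rep g) \<le> M"
    using A(2) finite_nat_set_iff_bounded_le[of "(\<lambda>g. length (rep g)) ` A"] by auto
  have lenflat: "length (flat xs) \<le> M * length xs" if "set xs \<subseteq> A" for xs
    using that by (induction xs) (use M in auto)
  define P where "P n \<alpha> \<gamma> \<longleftrightarrow> \<alpha> \<in> L \<and> \<gamma> \<in> L \<and> ?ev (\<alpha> @ [x]) = ?ev \<gamma> \<and>
      length \<gamma> \<le> length \<alpha> \<and> bc (flat (take (length \<gamma>) \<alpha>)) = 0 \<and>
      bc (flat \<alpha>) = n \<and> bc (flat \<gamma>) = n" for n \<alpha> \<gamma>
  have exP: "\<exists>p. P (Suc m) (fst p) (snd p)" for m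
  proof -
    let ?n = "Suc m"
    obtain \<gamma> where g: "\<gamma> \<in> L" "?ev \<gamma> = pclass R_aba (replicate ?n gb @ [ga])"
      using surj[of "replicate ?n gb @ [ga]"] by auto
    define k where "k = M * length \<gamma> + 1"
    define w0 where "w0 = replicate k ga @ replicate ?n gb"
    obtain \<alpha> where a: "\<alpha> \<in> L" "?ev \<alpha> = pclass R_aba w0"
      using surj[of w0] unfolding w0_def by auto
    have aA: "set \<alpha> \<subseteq> A" using a L(1) by auto
    have "flat \<alpha> \<in> pclass R_aba w0"
      using a evL pcong_refl unfolding pclass_def by blast
    then have fa: "flat \<alpha> = w0" unfolding w0_def singleton_class by simp
    have len: "length \<gamma> \<le> length \<alpha>"
    proof (rule ccontr)
      assume "\<not> ?thesis"
      then have "M * length \<alpha> \<le> M * length \<gamma>" by simp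
      moreover have "length (flat \<alpha>) \<le> M * length \<alpha>" using lenflat aA by blast
      moreover have "length (flat \<alpha>) = k + ?n" using fa w0_def by simp
      ultimately show False unfolding k_def by linarith
    qed
    have bc0: "bc (flat (take (length \<gamma>) \<alpha>)) = 0"
    proof -
      let ?p = "flat (take (length \<gamma>) \<alpha>)"
      have "w0 = ?p @ flat (drop (length \<gamma>) \<alpha>)"
        using fa by (metis append_take_drop_id flat_append)
      then have p: "?p = take (length ?p) w0" by simp
      have "set (take (length \<gamma>) \<alpha>) \<subseteq> A" by (rule order_trans[OF set_take_subset aA])
      moreover have "length (take (length \<gamma>) \<alpha>) = length \<gamma>" using len by simp
      ultimately have "length ?p \<le> M * length \<gamma>"
        using lenflat[of "take (length \<gamma>) \<alpha>"] by simp
      then have "length ?p \<le> k" unfolding k_def by simp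
      then have "?p = replicate (length ?p) ga" using p unfolding w0_def by simp
      then obtain l where "?p = replicate l ga" by blast
      then show ?thesis by (simp add: bc_rep0)
    qed
    have bca: "bc (flat \<alpha>) = ?n" using fa w0_def by (simp add: bc_def)
    have "pclass R_aba (flat \<gamma>) = pclass R_aba (replicate ?n gb @ [ga])" using g evL by simp
    then have "bc (flat \<gamma>) = bc (replicate ?n gb @ [ga])" using pclass_eqD bc_pcong by blast
    then have bcg: "bc (flat \<gamma>) = ?n" by (simp add: bc_def)
    have "?ev (\<alpha> @ [x]) = pclass R_aba (w0 @ [ga])" using evLx[OF a(1) xA] fa repx by simp
    also have "\<dots> = pclass R_aba (replicate ?n gb @ [ga])"
      unfolding w0_def using ak_bn_a[of k m] pclass_eq by simp
    finally have "?ev (\<alpha> @ [x]) = ?ev \<gamma>" using g by simp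
    then have "P ?n \<alpha> \<gamma>" unfolding P_def using a g len bc0 bca bcg by simp
    then show ?thesis by (rule_tac x="(\<alpha>, \<gamma>)" in exI) simp
  qed
  obtain f where f: "\<And>m. P (Suc m) (fst (f m)) (snd (f m))"
    using exP by metis
  define st where "st m = foldl \<delta> q0 (zip (map Some (take (length (snd (f m))) (fst (f m)))) (map Some (snd (f m))))" for m
  have "st ` UNIV \<subseteq> Q" unfolding st_def using foldl_in[OF Q(3) Q(2)] by auto
  then have "finite (st ` UNIV)" using Q(1) finite_subset by blast
  then have "\<not> inj st" using finite_imageD infinite_UNIV_nat by blast
  then obtain m1 m2 where mm: "m1 \<noteq> m2" "st m1 = st m2" unfolding inj_def by blast
  obtain \<alpha>1 \<gamma>1 where p1: "P (Suc m1) \<alpha>1 \<gamma>1" "f m1 = (\<alpha>1, \<gamma>1)" using f by (metis prod.collapse)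
  obtain \<alpha>2 \<gamma>2 where p2: "P (Suc m2) \<alpha>2 \<gamma>2" "f m2 = (\<alpha>2, \<gamma>2)" using f by (metis prod.collapse)
  define t1 where "t1 = length \<gamma>1"
  define t2 where "t2 = length \<gamma>2"
  define \<alpha>' where "\<alpha>' = take t1 \<alpha>1 @ drop t2 \<alpha>2"
  have l1: "t1 \<le> length \<alpha>1" using p1 unfolding P_def t1_def by simp
  have l2: "t2 \<le> length \<alpha>2" using p2 unfolding P_def t2_def by simp
  have tk: "take t1 \<alpha>' = take t1 \<alpha>1" "drop t1 \<alpha>' = drop t2 \<alpha>2"
    using l1 unfolding \<alpha>'_def by simp_all
  have la': "length \<gamma>1 \<le> length \<alpha>'" using l1 unfolding \<alpha>'_def t1_def by simp
  have pad': "padR \<alpha>' \<gamma>1 = zip (map Some (take t1 \<alpha>1)) (map Some \<gamma>1) @ map (\<lambda>c. (Some c, None)) (drop t2 \<alpha>2)"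
    using padR_split[OF la'] tk unfolding t1_def by simp
  have pad2: "padR \<alpha>2 \<gamma>2 = zip (map Some (take t2 \<alpha>2)) (map Some \<gamma>2) @ map (\<lambda>c. (Some c, None)) (drop t2 \<alpha>2)"
    using padR_split[of \<gamma>2 \<alpha>2] l2 unfolding t2_def by simp
  have "padR \<alpha>2 \<gamma>2 \<in> LA" using p2 unfolding P_def LA_def by blast
  then have "foldl \<delta> q0 (padR \<alpha>2 \<gamma>2) \<in> Fs" using LAe by simp
  moreover have "foldl \<delta> q0 (padR \<alpha>' \<gamma>1) = foldl \<delta> q0 (padR \<alpha>2 \<gamma>2)"
    using mm(2) p1(2) p2(2) unfolding pad' pad2 st_def t1_def t2_def by simp
  ultimately have "padR \<alpha>' \<gamma>1 \<in> LA" using LAe by simp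
  then obtain a b where ab: "padR \<alpha>' \<gamma>1 = padR a b" "a \<in> L" "b \<in> L" "?ev (a @ [x]) = ?ev b"
    unfolding LA_def by blast
  then have "a = \<alpha>'" "b = \<gamma>1" using padR_inj by metis+
  with ab have a': "\<alpha>' \<in> L" "?ev (\<alpha>' @ [x]) = ?ev \<gamma>1" by simp_all
  have g1L: "\<gamma>1 \<in> L" using p1 unfolding P_def by simp
  have "pclass R_aba (flat \<alpha>' @ [ga]) = pclass R_aba (flat \<gamma>1)"
    using a' evLx[OF a'(1) xA] evL[OF g1L] repx by simp
  then have "bc (flat \<alpha>' @ [ga]) = bc (flat \<gamma>1)" using pclass_eqD bc_pcong by blast
  then have e: "bc (flat \<alpha>') = Suc m1" using p1 unfolding P_def by (simp add: bc_def)
  have "bc (flat \<alpha>2) = bc (flat (take t2 \<alpha>2)) + bc (flat (drop t2 \<alpha>2))"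
    by (metis append_take_drop_id bc_append flat_append)
  then have "bc (flat (drop t2 \<alpha>2)) = Suc m2" using p2 unfolding P_def t2_def by simp
  moreover have "bc (flat (take t1 \<alpha>1)) = 0" using p1 unfolding P_def t1_def by simp
  ultimately have "bc (flat \<alpha>') = Suc m2" unfolding \<alpha>'_def by simp
  with e mm(1) show False by simp
qed

end
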